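(* Fix $h = 2\pi^2$. For a positive integer $N_t$ put $T=\sqrt{N_t h/4}$ and define, for $x\in[0,1]$, $$r_t(x) = \frac{xh}{\pi} \sum_{j=1}^{N_t} \frac{1}{\sqrt{jh}} \cdot \frac{e^{\sqrt{jh}-\sqrt{N_t h/4}}}{e^{2\sqrt{jh}-2\sqrt{N_t h/4}} + x}.$$ Assume the following bound holds for all sufficiently large $N_t$: for every $x\in[e^{4-2T},1]$, $$\left|\int_\Gamma f(u,x)\,\delta(u)\,du\right| < 12\, e^{-T},$$ where $f$, $\delta$ and $\Gamma$ are as described in the context. Then, as $N_t\to\infty$, uniformly for $x\in[0,1]$, $$|r_t(x)-\sqrt{x}\,| < 20\, e^{-\sqrt{N_t h/4}} = 20\, e^{-\pi\sqrt{N_t/2}}.$$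
   Context: Here $\sqrt{u}$ denotes the principal branch of the square root. For $u\in\mathbb{C}$ and $x\in(0,1]$, $f(u,x) = \frac{x}{\pi}\,\frac{1}{\sqrt{u}}\,\frac{e^{\sqrt{u}-T}}{e^{2(\sqrt{u}-T)}+x}$. The function $\delta(u)=\mu(u)-m(u)$, where $\mu(u)=-\tfrac12$ if $\operatorname{Im}u\ge 0$ and $\mu(u)=\tfrac12$ if $\operatorname{Im}u<0$, and $m(u) = -\tfrac{i}{2}\cot(\pi u/h)$. The contour $\Gamma$ is the positively oriented boundary of the rectangle $\{u: 1\le \operatorname{Re}u\le 4T^2+1,\ |\operatorname{Im}u|\le a\}$ with $a = 2\pi(T+\tfrac12\log x)$. *)

theory Defs
  imports "HOL-Complex_Analysis.Complex_Analysis"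
begin

definition hh :: real where "hh = 2 * pi ^ 2"

definition Tt :: "nat \<Rightarrow> real" where "Tt N = sqrt (real N * hh / 4)"

definition r_t :: "nat \<Rightarrow> real \<Rightarrow> real" where
  "r_t N x = x * hh / pi * (\<Sum>j=1..N. 1 / sqrt (real j * hh) *
      exp (sqrt (real j * hh) - sqrt (real N * hh / 4)) /
      (exp (2 * sqrt (real j * hh) - 2 * sqrt (real N * hh / 4)) + x))"

definition f_fun :: "real \<Rightarrow> complex \<Rightarrow> real \<Rightarrow> complex" where
  "f_fun T u x = of_real x / of_real pi * (1 / csqrt u) *
      (exp (csqrt u - of_real T) / (exp (2 * (csqrt u - of_real T)) + of_real x))"

definition mu_fun :: "complex \<Rightarrow> complex" where
  "mu_fun u = (if Im u \<ge> 0 then - 1/2 else 1/2)"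

definition m_fun :: "complex \<Rightarrow> complex" where
  "m_fun u = - (\<i> / 2) * cot (of_real pi * u / of_real hh)"

definition delta_fun :: "complex \<Rightarrow> complex" where
  "delta_fun u = mu_fun u - m_fun u"

definition Gamma_path :: "real \<Rightarrow> real \<Rightarrow> real \<Rightarrow> complex" where
  "Gamma_path T x = (let a = 2 * pi * (T + ln x / 2) in
      rectpath (Complex 1 (- a)) (Complex (4 * T ^ 2 + 1) a))"

end

theory Submission
  imports Defs
begin


lemma pole_char:
  fixes T x :: real and u :: complex
  assumes "x > 0" "exp (2 * (csqrt u - of_real T)) + of_real x = 0"
  shows "\<exists>n::int. csqrt u = Complex (T + ln x / 2) (pi * (of_int n + 1/2))"
proof -
  have "exp (2 * (csqrt u - of_real T)) = - of_real x" using assms(2) by (simp add: eq_neg_iff_add_eq_0)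
  also have "- (of_real x :: complex) = exp (of_real (ln x) + pi * \<i>)"
    using assms(1) by (simp add: exp_add exp_of_real)
  finally obtain n :: int where n: "2 * (csqrt u - of_real T) = of_real (ln x) + pi * \<i> + (of_int (2 * n) * pi) * \<i>"
    using exp_eq by blast
  have "csqrt u = Complex (T + ln x / 2) (pi * (of_int n + 1/2))"
  proof -
    have "csqrt u = of_real T + (of_real (ln x) + pi * \<i> + (of_int (2 * n) * pi) * \<i>) / 2"
      using n by (simp add: field_simps)
    then show ?thesis by (simp add: complex_eq_iff field_simps)
  qed
  then show ?thesis by blast
qed

lemma dp_formula:
  fixes z :: complex
  assumes "sin z \<noteq> 0"
  shows "-1/2 + (\<i>/2) * cot z = exp (2*\<i>*z) / (1 - exp (2*\<i>*z))"
    and "1/2 + (\<i>/2) * cot z = 1 / (1 - exp (2*\<i>*z))"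
    and "1 - exp (2*\<i>*z) \<noteq> 0"
proof -
  define A where "A = exp (\<i> * z)"
  have A0: "A \<noteq> 0" by (simp add: A_def)
  have E: "exp (2*\<i>*z) = A * A" by (simp add: A_def exp_add[symmetric] mult.assoc)
  have em: "exp (-(\<i>*z)) = inverse A" by (simp add: A_def exp_minus)
  have s: "sin z = (A - inverse A) / (2*\<i>)" by (simp add: sin_exp_eq em A_def)
  have c: "cos z = (A + inverse A) / 2" by (simp add: cos_exp_eq em A_def)
  have "A - inverse A \<noteq> 0" using assms s by auto
  then have AA: "A * A - 1 \<noteq> 0" using A0 by (simp add: field_simps)
  then have AA': "1 - A * A \<noteq> 0" by (metis eq_iff_diff_eq_0)
  show "1 - exp (2*\<i>*z) \<noteq> 0" using AA' E by simp
  have ct: "cot z = \<i> * (A * A + 1) / (A * A - 1)"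
    unfolding cot_def s c using A0 AA by (simp add: field_simps)
  show "-1/2 + (\<i>/2) * cot z = exp (2*\<i>*z) / (1 - exp (2*\<i>*z))"
    unfolding ct E using AA AA' by (simp add: field_simps; simp add: algebra_simps)
  show "1/2 + (\<i>/2) * cot z = 1 / (1 - exp (2*\<i>*z))"
    unfolding ct E using AA AA' by (simp add: field_simps; simp add: algebra_simps)
qed

lemma norm_exp2iz: "norm (exp (2*\<i>*z)) = exp (-2 * Im z)"
  by (simp add: norm_exp_eq_Re)

lemma bound_up:
  fixes E :: complex assumes "norm E < 1"
  shows "norm (E / (1 - E)) \<le> norm E / (1 - norm E)"
proof -
  have "1 - norm E \<le> norm (1 - E)" using norm_triangle_ineq2[of 1 E] by simp
  then show ?thesis using assms
    by (simp add: norm_divide; intro frac_le) auto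
qed

lemma bound_down:
  fixes E :: complex assumes "norm E > 1"
  shows "norm (1 / (1 - E)) \<le> 1 / (norm E - 1)"
proof -
  have "norm E - 1 \<le> norm (1 - E)" using norm_triangle_ineq2[of E 1] by (simp add: norm_minus_commute)
  then show ?thesis using assms
    by (simp add: norm_divide; intro frac_le) auto
qed

lemma hci_spike_start:
  assumes "(f has_contour_integral i) (linepath a b)"
    and "\<And>z. z \<in> closed_segment a b \<Longrightarrow> z \<noteq> a \<Longrightarrow> g z = f z"
  shows "(g has_contour_integral i) (linepath a b)"
proof -
  have fi: "((\<lambda>t. f (linepath a b t) * (b - a)) has_integral i) {0..1}"
    using assms(1) by (simp add: has_contour_integral_linepath)
  have "((\<lambda>t. g (linepath a b t) * (b - a)) has_integral i) {0..1}"
  proof (rule has_integral_spike_finite[where S="{0}" and f="\<lambda>t. f (linepath a b t) * (b - a)", OF _ _ fi])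
    fix t assume t: "t \<in> {0..1::real} - {0}"
    show "g (linepath a b t) * (b - a) = f (linepath a b t) * (b - a)"
    proof (cases "a = b")
      case False
      have "linepath a b t \<noteq> a"
      proof
        assume "linepath a b t = a"
        then have "t *\<^sub>R (b - a) = 0" by (simp add: linepath_def algebra_simps)
        then show False using t False by auto
      qed
      moreover have "linepath a b t \<in> closed_segment a b"
        using t by (metis DiffD1 linepath_in_path)
      ultimately show ?thesis using assms(2) by simp
    qed simp
  qed simp
  then show ?thesis by (simp add: has_contour_integral_linepath)
qed

lemma hci_spike_end:
  assumes "(f has_contour_integral i) (linepath a b)"
    and "\<And>z. z \<in> closed_segment a b \<Longrightarrow> z \<noteq> b \<Longrightarrow> g z = f z"
  shows "(g has_contour_integral i) (linepath a b)"
proof -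
  have "(f has_contour_integral (-i)) (linepath b a)"
    using assms(1) by (rule has_contour_integral_reverse_linepath)
  then have "(g has_contour_integral (-i)) (linepath b a)"
    by (rule hci_spike_start) (use assms(2) in \<open>auto simp: closed_segment_commute\<close>)
  then have "(g has_contour_integral (- (-i))) (linepath a b)"
    by (rule has_contour_integral_reverse_linepath)
  then show ?thesis by simp
qed

lemma F0_real:
  assumes "t > 0"
  shows "f_fun T (of_real t) x = of_real (x / pi * (1 / sqrt t) * (exp (sqrt t - T) / (exp (2 * (sqrt t - T)) + x)))"
  using assms by (simp add: f_fun_def csqrt_of_real exp_of_real[symmetric] del: exp_of_real)

lemma exp1_gt: "exp 1 > (2.71::real)"
  using e_approx_32 by (simp add: abs_if split: if_split_asm)


locale rs =
  fixes N :: nat and x :: real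
  assumes xlo: "exp (4 - 2 * Tt N) \<le> x" and xhi: "x \<le> 1"
begin

definition "T = Tt N"
definition "c = T + ln x / 2"
definition "a = 2 * pi * c"
definition "B = 4 * T^2 + 1"
definition "w1 = Complex c (pi/2)"
definition "w2 = Complex c (-pi/2)"
definition "p1 = w1^2"
definition "p2 = w2^2"
definition "z1 = Complex 1 (-a)"
definition "z2 = Complex B (-a)"
definition "z3 = Complex B a"
definition "z4 = Complex 1 a"
definition "Bc = Complex B 0"
definition "S = box (Complex (1/2) (-(a+1))) (Complex (B+1/2) (a+1))"
definition "F0 = (\<lambda>u. f_fun T u x)"
definition "Nf = (\<lambda>u. of_real x / of_real pi * (1 / csqrt u) * exp (csqrt u - of_real T))"
definition "Dn = (\<lambda>u. exp (2 * (csqrt u - of_real T)) + of_real x)"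
definition "dp = (\<lambda>u. -1/2 - m_fun u)"
definition "g1 = (\<lambda>u. F0 u * dp u)"
definition "J = (\<lambda>j. complex_of_real (real j * hh)) ` {1..N}"
definition "P = {p1, p2} \<union> J"

lemma hh_gt: "hh > 18"
proof -
  have "pi * pi > 3 * 3" using pi_gt3 by (intro mult_strict_mono) auto
  then show ?thesis by (simp add: hh_def power2_eq_square)
qed

lemma pi_sq_lt: "pi^2 < 12"
proof -
  have "pi * pi < 3.2 * 3.2" using pi_approx by (intro mult_strict_mono) auto
  then show ?thesis by (simp add: power2_eq_square)
qed

lemma T4: "4 * T^2 = real N * hh"
  unfolding T_def Tt_def using hh_gt by simp

lemma T_ge: "T \<ge> 2"
proof -
  have "exp (4 - 2 * T) \<le> 1" using xlo xhi unfolding T_def by linarith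
  then have "4 - 2 * T \<le> 0" by simp
  then show ?thesis by linarith
qed

lemma x_pos: "x > 0" using xlo by (metis exp_gt_zero less_le_trans)

lemma c_ge: "c \<ge> 2"
proof -
  have "ln (exp (4 - 2 * T)) \<le> ln x" using xlo x_pos T_def by (subst ln_le_cancel_iff) auto
  then show ?thesis unfolding c_def by simp
qed

lemma c_le: "c \<le> T"
  using xhi x_pos unfolding c_def by simp

lemma a_pos: "a > 0" using c_ge unfolding a_def by simp

lemma B_eq: "B = real N * hh + 1" unfolding B_def using T4 by simp

lemma N_pos: "N \<ge> 1"
proof (rule ccontr)
  assume "\<not> N \<ge> 1" then have "N = 0" by simp
  then have "T = 0" unfolding T_def Tt_def by simp
  then show False using T_ge by simp
qed

lemma exp_cT: "exp (c - T) = sqrt x"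
proof -
  have "exp (c - T) = exp (ln x / 2)" unfolding c_def by simp
  also have "\<dots> = x powr (1/2)" using x_pos by (simp add: powr_def)
  also have "\<dots> = sqrt x" using x_pos by (simp add: powr_half_sqrt)
  finally show ?thesis .
qed

lemma exp_mc: "exp (-c) = exp (-T) / sqrt x"
proof -
  have "exp (-c) = exp (-T) / exp (c - T)" by (simp add: exp_diff exp_minus field_simps)
  then show ?thesis using exp_cT by simp
qed

lemma csqrt_p1: "csqrt p1 = w1" unfolding p1_def w1_def using c_ge by (intro csqrt_square) simp
lemma csqrt_p2: "csqrt p2 = w2" unfolding p2_def w2_def using c_ge by (intro csqrt_square) simp

lemma p1_eq: "p1 = Complex (c^2 - pi^2/4) (c * pi)"
  unfolding p1_def w1_def by (simp add: complex_eq_iff power2_eq_square)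
lemma p2_eq: "p2 = Complex (c^2 - pi^2/4) (- c * pi)"
  unfolding p2_def w2_def by (simp add: complex_eq_iff power2_eq_square)

lemma Re_p_gt: "c^2 - pi^2/4 > 1"
proof -
  have "c*c \<ge> 2*2" using c_ge by (intro mult_mono) auto
  then show ?thesis using pi_sq_lt by (simp add: power2_eq_square)
qed

lemma Re_p_lt: "c^2 - pi^2/4 < B"
proof -
  have "c^2 \<le> T^2" using c_ge c_le by (intro power_mono) auto
  moreover have "T^2 \<ge> 0" by simp
  moreover have "pi^2 > 0" by simp
  ultimately show ?thesis unfolding B_def by linarith
qed

end


context rs begin

lemma F0_eq: "F0 = (\<lambda>u. Nf u / Dn u)"
  unfolding F0_def Nf_def Dn_def f_fun_def by (rule ext) simp

lemma Dn_zero: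
  assumes "Dn u = 0"
  shows "\<exists>n::int. csqrt u = Complex c (pi * (of_int n + 1/2)) \<and> Im u = 2 * c * (pi * (of_int n + 1/2))"
proof -
  obtain n :: int where n: "csqrt u = Complex c (pi * (of_int n + 1/2))"
    using pole_char[of x u T] assms x_pos unfolding Dn_def c_def by auto
  have "u = (csqrt u)^2" by simp
  then have "Im u = Im ((csqrt u)^2)" by simp
  also have "\<dots> = 2 * c * (pi * (of_int n + 1/2))" unfolding n by (simp add: power2_eq_square)
  finally show ?thesis using n by blast
qed

lemma int_half: "\<bar>real_of_int n + 1/2\<bar> \<ge> 1/2"
  by (cases "n \<ge> 0") auto

lemma Dn_zero_Im:
  assumes "Dn u = 0" shows "\<bar>Im u\<bar> \<ge> c * pi"
proof -
  obtain n :: int where n: "Im u = 2 * c * (pi * (of_int n + 1/2))" using Dn_zero[OF assms] by blast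
  have "\<bar>Im u\<bar> = 2 * c * pi * \<bar>of_int n + 1/2\<bar>" unfolding n using c_ge by (simp add: abs_mult)
  also have "\<dots> \<ge> 2 * c * pi * (1/2)" using c_ge int_half[of n] by (intro mult_left_mono) auto
  finally show ?thesis by simp
qed

lemma Dn_p1: "Dn p1 = 0"
proof -
  have "exp (2 * (w1 - of_real T)) = exp (of_real (ln x) + pi * \<i>)"
    unfolding w1_def c_def by (rule arg_cong[where f=exp]) (simp add: complex_eq_iff)
  also have "\<dots> = - of_real x" using x_pos by (simp add: exp_add exp_of_real)
  finally show ?thesis unfolding Dn_def csqrt_p1 by simp
qed

lemma Dn_p2: "Dn p2 = 0"
proof -
  have "exp (2 * (w2 - of_real T)) = exp (of_real (ln x) + pi * \<i> + of_int (2 * (-1)) * pi * \<i>)"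
    unfolding w2_def c_def by (rule arg_cong[where f=exp]) (simp add: complex_eq_iff)
  also have "\<dots> = exp (of_real (ln x) + pi * \<i>)" by (rule exp_eq[THEN iffD2]) (intro exI[of _ "-1"], simp)
  also have "\<dots> = - of_real x" using x_pos by (simp add: exp_add exp_of_real)
  finally show ?thesis unfolding Dn_def csqrt_p2 by simp
qed

lemma S_Re: "u \<in> S \<Longrightarrow> Re u > 1/2 \<and> Re u < B + 1/2 \<and> \<bar>Im u\<bar> < a + 1"
  unfolding S_def by (auto simp: in_box_complex_iff)

lemma Dn_zero_S:
  assumes "u \<in> S" "Dn u = 0" shows "u = p1 \<or> u = p2"
proof -
  obtain n :: int where n: "csqrt u = Complex c (pi * (of_int n + 1/2))" "Im u = 2 * c * (pi * (of_int n + 1/2))"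
    using Dn_zero[OF assms(2)] by blast
  have lt: "\<bar>Im u\<bar> < 2 * (c * pi) + 1" using S_Re[OF assms(1)] unfolding a_def by (simp add: algebra_simps)
  have "n = 0 \<or> n = -1"
  proof (rule ccontr)
    assume "\<not> (n = 0 \<or> n = -1)"
    then have "n \<ge> 1 \<or> n \<le> -2" by auto
    then have h: "\<bar>of_int n + 1/2\<bar> \<ge> (3/2::real)" by auto
    have e: "Im u = (2 * (c * pi)) * (of_int n + 1/2)" unfolding n by (simp add: algebra_simps)
    have "\<bar>Im u\<bar> = \<bar>2 * (c * pi)\<bar> * \<bar>of_int n + 1/2\<bar>" unfolding e abs_mult ..
    also have "\<bar>2 * (c * pi)\<bar> = 2 * (c * pi)" using c_ge by simp
    finally have "\<bar>Im u\<bar> = (2 * (c * pi)) * \<bar>of_int n + 1/2\<bar>" .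
    also have "\<dots> \<ge> (2 * (c * pi)) * (3/2)" using c_ge h by (intro mult_left_mono) auto
    finally have "\<bar>Im u\<bar> \<ge> 3 * (c * pi)" by (simp add: mult.commute)
    moreover have "c * pi \<ge> 2 * 2" using c_ge pi_ge_two by (intro mult_mono) auto
    ultimately show False using lt by linarith
  qed
  then have "csqrt u = w1 \<or> csqrt u = w2" using n unfolding w1_def w2_def by (auto simp: complex_eq_iff)
  moreover have "u = (csqrt u)^2" by simp
  ultimately show ?thesis unfolding p1_def p2_def by metis
qed

lemma sin_zero_S:
  assumes "u \<in> S" "sin (of_real pi * u / of_real hh) = 0" shows "u \<in> J"
proof -
  obtain n :: int where n: "of_real pi * u / of_real hh = of_real (of_int n * pi)"
    using assms(2) sin_eq_0 by blast
  have hh0: "hh > 0" using hh_gt by simp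
  then have u: "u = of_real (of_int n * hh)" using n by (simp add: field_simps)
  have "of_int n * hh > 1/2" "of_int n * hh < B + 1/2" using S_Re[OF assms(1)] u by auto
  then have "of_int n * hh > 0" "of_int n * hh < (real N + 1) * hh" using B_eq hh_gt by (auto simp: algebra_simps)
  then have "of_int n > (0::real)" "of_int n < real N + 1" using hh0 
    by (auto simp: zero_less_mult_iff mult_less_cancel_right)
  then have n1: "n \<ge> 1" "n \<le> int N" by linarith+
  then have "u = of_real (real (nat n) * hh)" using u by simp
  moreover have "nat n \<in> {1..N}" using n1 by auto
  ultimately show ?thesis unfolding J_def by blast
qed

lemma J_props: "z \<in> J \<Longrightarrow> Im z = 0 \<and> Re z > 1 \<and> Re z < B"
proof -
  assume "z \<in> J"
  then obtain j where j: "j \<in> {1..N}" "z = of_real (real j * hh)" unfolding J_def by auto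
  have j1: "real j * hh \<ge> 1 * hh" using j hh_gt by (intro mult_right_mono) auto
  have j2: "real j * hh \<le> real N * hh" using j hh_gt by (intro mult_right_mono) auto
  have r: "Re z = real j * hh" "Im z = 0" using j by auto
  have "Re z > 1" using r j1 hh_gt by linarith
  moreover have "Re z < B" using r j2 B_eq by linarith
  ultimately show ?thesis using r by simp
qed

lemma Re_pos_nonpos: "Re u > 0 \<Longrightarrow> u \<notin> \<real>\<^sub>\<le>\<^sub>0"
  by (auto simp: complex_nonpos_Reals_iff)

lemma Nf_holo: "Nf holomorphic_on {u. Re u > 0}"
proof -
  have "\<And>u. Re u > 0 \<Longrightarrow> csqrt u \<noteq> 0" by (metis csqrt_eq_0 zero_complex.simps(1) less_irrefl)
  then show ?thesis unfolding Nf_def by (auto intro!: holomorphic_intros simp: Re_pos_nonpos)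
qed

lemma Dn_holo: "Dn holomorphic_on {u. Re u > 0}"
  unfolding Dn_def by (auto intro!: holomorphic_intros simp: Re_pos_nonpos)

definition "U0 = {u. Re u > 0 \<and> Dn u \<noteq> 0}"
definition "U1 = {u. Re u > 0 \<and> Dn u \<noteq> 0 \<and> sin (of_real pi * u / of_real hh) \<noteq> 0}"

lemma F0_holo: "F0 holomorphic_on U0"
  unfolding F0_eq U0_def
  by (intro holomorphic_intros holomorphic_on_subset[OF Nf_holo] holomorphic_on_subset[OF Dn_holo]) auto

lemma dp_eq: "dp u = -1/2 + (\<i>/2) * cot (of_real pi * u / of_real hh)"
  unfolding dp_def m_fun_def by simp

lemma dp_holo: "dp holomorphic_on {u. sin (of_real pi * u / of_real hh) \<noteq> 0}"
  unfolding dp_eq[abs_def] cot_def by (auto intro!: holomorphic_intros)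

lemma g1_holo: "g1 holomorphic_on U1"
  unfolding g1_def
  by (intro holomorphic_intros holomorphic_on_subset[OF F0_holo] holomorphic_on_subset[OF dp_holo])
     (auto simp: U0_def U1_def)

lemma S_P_U1: "S - P \<subseteq> U1"
proof
  fix u assume u: "u \<in> S - P"
  then have "Re u > 0" using S_Re by force
  moreover have "Dn u \<noteq> 0" using Dn_zero_S u unfolding P_def by blast
  moreover have "sin (of_real pi * u / of_real hh) \<noteq> 0" using sin_zero_S u unfolding P_def by blast
  ultimately show "u \<in> U1" unfolding U1_def by blast
qed

lemma S_p_U0: "S - {p1, p2} \<subseteq> U0"
proof
  fix u assume u: "u \<in> S - {p1, p2}"
  then have "Re u > 0" using S_Re by force
  moreover have "Dn u \<noteq> 0" using Dn_zero_S u by blast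
  ultimately show "u \<in> U0" unfolding U0_def by blast
qed

end


context rs begin

lemma sin_zero_real: "sin (of_real pi * u / of_real hh) = 0 \<Longrightarrow> Im u = 0"
proof -
  assume "sin (of_real pi * u / of_real hh) = 0"
  then obtain n :: int where n: "of_real pi * u / of_real hh = of_real (of_int n * pi)"
    using sin_eq_0 by blast
  have "hh > 0" using hh_gt by simp
  then have "u = of_real (of_int n * hh)" using n by (simp add: field_simps)
  then show "Im u = 0" by simp
qed

lemma Nf_nz: "csqrt p = w \<Longrightarrow> w \<noteq> 0 \<Longrightarrow> Nf p \<noteq> 0"
  unfolding Nf_def using x_pos by simp

lemma Dn_deriv:
  assumes "csqrt p = w" "Dn p = 0" "Re p > 0"
  shows "(Dn has_field_derivative (- of_real x / w)) (at p)"
proof -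
  have w0: "w \<noteq> 0" using assms(1,3) by (metis csqrt_eq_0 zero_complex.simps(1) less_irrefl)
  have e: "exp (2 * (w - of_real T)) = - of_real x" using assms(1,2) unfolding Dn_def by (simp add: eq_neg_iff_add_eq_0)
  have "(Dn has_field_derivative (exp (2 * (csqrt p - of_real T)) * (2 * (1 / (2 * csqrt p))))) (at p)"
    unfolding Dn_def using assms(3)
    by (auto intro!: derivative_eq_intros simp: Re_pos_nonpos)
  also have "exp (2 * (csqrt p - of_real T)) * (2 * (1 / (2 * csqrt p))) = - of_real x / w"
    using assms(1) e w0 by simp
  finally show ?thesis .
qed

lemma res_p:
  assumes "csqrt p = w" "Dn p = 0" "Re p > 1" "\<bar>Im p\<bar> > 1"
    and hq: "q holomorphic_on ball p 1" "q p \<noteq> 0"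
  shows "residue (\<lambda>u. F0 u * q u) p = - (1 / of_real pi) * exp (w - of_real T) * q p"
proof -
  have w0: "w \<noteq> 0" using assms(1,3) by (metis csqrt_eq_0 zero_complex.simps(1) less_irrefl zero_less_one order.strict_trans)
  have ball: "ball p 1 \<subseteq> {u. Re u > 0}"
  proof
    fix u assume "u \<in> ball p 1"
    then have "\<bar>Re p - Re u\<bar> < 1" using abs_Re_le_cmod[of "p - u"] by (simp add: dist_norm)
    then show "u \<in> {u. Re u > 0}" using assms(3) by simp
  qed
  have eq: "(\<lambda>u. F0 u * q u) = (\<lambda>u. (Nf u * q u) / Dn u)" unfolding F0_eq by (rule ext) simp
  have "residue (\<lambda>u. (Nf u * q u) / Dn u) p = Nf p * q p / (- of_real x / w)"
  proof (rule residue_simple_pole_deriv)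
    show "(\<lambda>u. Nf u * q u) holomorphic_on ball p 1"
      by (intro holomorphic_intros holomorphic_on_subset[OF Nf_holo ball] hq)
    show "Dn holomorphic_on ball p 1" by (rule holomorphic_on_subset[OF Dn_holo ball])
    show "(Dn has_field_derivative (- of_real x / w)) (at p)" using assms by (intro Dn_deriv) auto
    show "Nf p * q p \<noteq> 0" using Nf_nz[OF assms(1) w0] hq by simp
    show "- of_real x / w \<noteq> 0" using x_pos w0 by simp
  qed (use assms in auto)
  also have "\<dots> = - (1 / of_real pi) * exp (w - of_real T) * q p"
    unfolding Nf_def assms(1) using w0 x_pos by (simp add: field_simps)
  finally show ?thesis using eq by simp
qed

lemma ball_im_nz: "\<bar>Im p\<bar> > 1 \<Longrightarrow> u \<in> ball p 1 \<Longrightarrow> Im u \<noteq> 0"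
proof -
  assume "\<bar>Im p\<bar> > 1" "u \<in> ball p 1"
  then have "\<bar>Im p - Im u\<bar> < 1" using abs_Im_le_cmod[of "p - u"] by (simp add: dist_norm)
  then show "Im u \<noteq> 0" using \<open>\<bar>Im p\<bar> > 1\<close> by auto
qed

lemma dp_holo_ball: "\<bar>Im p\<bar> > 1 \<Longrightarrow> dp holomorphic_on ball p 1"
  by (rule holomorphic_on_subset[OF dp_holo]) (auto dest: ball_im_nz sin_zero_real)

lemma dp_nz: "Im p \<noteq> 0 \<Longrightarrow> dp p \<noteq> 0"
proof -
  assume "Im p \<noteq> 0"
  then have s: "sin (of_real pi * p / of_real hh) \<noteq> 0" using sin_zero_real by blast
  show "dp p \<noteq> 0" unfolding dp_eq dp_formula(1)[OF s] using dp_formula(3)[OF s] by simp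
qed

lemma Im_p1: "Im p1 = c * pi" and Im_p2: "Im p2 = - c * pi" and Re_p1: "Re p1 = c^2 - pi^2/4" and Re_p2: "Re p2 = c^2 - pi^2/4"
  using p1_eq p2_eq by auto

lemma cpi_gt: "c * pi > 1"
proof -
  have "c * pi \<ge> 2 * 2" using c_ge pi_ge_two by (intro mult_mono) auto
  then show ?thesis by simp
qed

lemma res_g1_p1: "residue g1 p1 = - (1 / of_real pi) * exp (w1 - of_real T) * dp p1"
  unfolding g1_def using Im_p1 cpi_gt Re_p1 Re_p_gt
  by (intro res_p csqrt_p1 Dn_p1 dp_holo_ball dp_nz) auto

lemma res_g1_p2: "residue g1 p2 = - (1 / of_real pi) * exp (w2 - of_real T) * dp p2"
  unfolding g1_def using Im_p2 cpi_gt Re_p2 Re_p_gt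
  by (intro res_p csqrt_p2 Dn_p2 dp_holo_ball dp_nz) auto

lemma res_F0_p2: "residue F0 p2 = - (1 / of_real pi) * exp (w2 - of_real T)"
  using res_p[OF csqrt_p2 Dn_p2, of "\<lambda>_. 1"] Im_p2 cpi_gt Re_p2 Re_p_gt by auto

end


context rs begin

lemma g1_split: "g1 = (\<lambda>u. (-1/2) * F0 u + (F0 u * (\<i>/2) * cos (of_real pi * u / of_real hh)) / sin (of_real pi * u / of_real hh))"
  unfolding g1_def dp_eq cot_def by (rule ext) (simp add: algebra_simps)

lemma res_J:
  assumes j: "j \<in> {1..N}"
  shows "residue g1 (of_real (real j * hh)) = F0 (of_real (real j * hh)) * (\<i> * of_real hh / (2 * of_real pi))"
proof -
  define z0 where "z0 = (of_real (real j * hh) :: complex)"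
  define s where "s = ball z0 (1/2)"
  have hh0: "hh > 18" by (rule hh_gt)
  have jr: "real j \<ge> 1" using j by auto
  have z0re: "Re z0 = real j * hh" "Im z0 = 0" unfolding z0_def by auto
  have "real j * hh \<ge> 1 * hh" using jr hh0 by (intro mult_right_mono) auto
  then have jh: "real j * hh \<ge> hh" by simp
  have sU0: "s \<subseteq> U0"
  proof
    fix u assume "u \<in> s"
    then have d: "norm (z0 - u) < 1/2" unfolding s_def by (simp add: dist_norm)
    have "\<bar>Re z0 - Re u\<bar> < 1/2" using abs_Re_le_cmod[of "z0 - u"] d by simp
    then have "Re u > 0" using z0re jh hh0 by linarith
    moreover have "\<bar>Im z0 - Im u\<bar> < 1/2" using abs_Im_le_cmod[of "z0 - u"] d by simp
    then have "\<bar>Im u\<bar> < c * pi" using z0re cpi_gt by linarith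
    then have "Dn u \<noteq> 0" using Dn_zero_Im by force
    ultimately show "u \<in> U0" unfolding U0_def by blast
  qed
  have F0s: "F0 holomorphic_on s" by (rule holomorphic_on_subset[OF F0_holo sU0])
  have sin_s: "sin (of_real pi * u / of_real hh) \<noteq> 0" if "u \<in> s - {z0}" for u
  proof
    assume "sin (of_real pi * u / of_real hh) = 0"
    then obtain n :: int where n: "of_real pi * u / of_real hh = of_real (of_int n * pi)"
      using sin_eq_0 by blast
    then have u: "u = of_real (of_int n * hh)" using hh0 by (simp add: field_simps)
    have "norm (z0 - u) < 1/2" using that unfolding s_def by (simp add: dist_norm)
    then have "\<bar>real j * hh - of_int n * hh\<bar> < 1/2" unfolding u z0_def
      by (metis norm_of_real of_real_diff)
    then have "\<bar>real j - of_int n\<bar> * hh < 1/2" using hh0 by (simp add: left_diff_distrib[symmetric] abs_mult)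
    then have lt: "\<bar>real j - of_int n\<bar> * hh < 1/2" .
    have "\<bar>real j - of_int n\<bar> < 1"
    proof (rule ccontr)
      assume "\<not> \<bar>real j - of_int n\<bar> < 1"
      then have "\<bar>real j - of_int n\<bar> * hh \<ge> 1 * hh" using hh0 by (intro mult_right_mono) auto
      then show False using lt hh0 by linarith
    qed
    then have "of_int (int j - n) < (1::real)" "of_int (int j - n) > (-1::real)" by (simp_all add: abs_less_iff)
    then have "int j - n < 1" "int j - n > -1" by linarith+
    then have "n = int j" by linarith
    then have "of_int n = real j" by simp
    then have "u = z0" unfolding u z0_def by simp
    then show False using that by simp
  qed
  have cosz: "cos (of_real pi * z0 / of_real hh) = (-1)^j"
  proof -
    have "of_real pi * z0 / of_real hh = of_real (real j * pi)" unfolding z0_def using hh0 by (simp add: field_simps)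
    then show ?thesis by (simp add: cos_of_real cos_npi)
  qed
  have F0z: "F0 z0 \<noteq> 0"
  proof -
    have "real j * hh > 0" using jh hh0 by linarith
    then have "F0 z0 = of_real (x / pi * (1 / sqrt (real j * hh)) * (exp (sqrt (real j * hh) - T) / (exp (2 * (sqrt (real j * hh) - T)) + x)))"
      unfolding F0_def z0_def by (rule F0_real)
    moreover have "x / pi * (1 / sqrt (real j * hh)) * (exp (sqrt (real j * hh) - T) / (exp (2 * (sqrt (real j * hh) - T)) + x)) > 0"
      using x_pos \<open>real j * hh > 0\<close> by (intro mult_pos_pos divide_pos_pos add_pos_pos) auto
    ultimately show ?thesis by (metis of_real_eq_0_iff order_less_irrefl)
  qed
  have r1: "residue (\<lambda>u. (-1/2) * F0 u) z0 = 0"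
    by (rule residue_holo[of s]) (use F0s in \<open>auto simp: s_def intro!: holomorphic_intros\<close>)
  have r2: "residue (\<lambda>u. (F0 u * (\<i>/2) * cos (of_real pi * u / of_real hh)) / sin (of_real pi * u / of_real hh)) z0
      = (F0 z0 * (\<i>/2) * cos (of_real pi * z0 / of_real hh)) / (cos (of_real pi * z0 / of_real hh) * (of_real pi / of_real hh))"
  proof (rule residue_simple_pole_deriv)
    show "(\<lambda>u. F0 u * (\<i>/2) * cos (of_real pi * u / of_real hh)) holomorphic_on s"
      using hh0 by (intro holomorphic_intros F0s) auto
    show "(\<lambda>u. sin (of_real pi * u / of_real hh)) holomorphic_on s" using hh0 by (intro holomorphic_intros) auto
    show "((\<lambda>u. sin (of_real pi * u / of_real hh)) has_field_derivative
           (cos (of_real pi * z0 / of_real hh) * (of_real pi / of_real hh))) (at z0)"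
      using hh0 by (auto intro!: derivative_eq_intros)
    show "F0 z0 * (\<i>/2) * cos (of_real pi * z0 / of_real hh) \<noteq> 0" using F0z cosz by simp
    show "sin (of_real pi * z0 / of_real hh) = 0"
    proof -
      have "of_real pi * z0 / of_real hh = of_real (real j * pi)" unfolding z0_def using hh0 by (simp add: field_simps)
      then show ?thesis by (simp add: sin_of_real)
    qed
    show "cos (of_real pi * z0 / of_real hh) * (of_real pi / of_real hh) \<noteq> 0" using cosz hh0 by simp
  qed (auto simp: s_def)
  have "residue g1 z0 = residue (\<lambda>u. (-1/2) * F0 u) z0 + residue (\<lambda>u. (F0 u * (\<i>/2) * cos (of_real pi * u / of_real hh)) / sin (of_real pi * u / of_real hh)) z0"
    unfolding g1_split
  proof (rule residue_add[of s])
    show "(\<lambda>u. (-1/2) * F0 u) holomorphic_on s - {z0}"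
      by (intro holomorphic_intros holomorphic_on_subset[OF F0s]) auto
    show "(\<lambda>u. (F0 u * (\<i>/2) * cos (of_real pi * u / of_real hh)) / sin (of_real pi * u / of_real hh)) holomorphic_on s - {z0}"
      using sin_s by (intro holomorphic_intros holomorphic_on_subset[OF F0s]) auto
  qed (auto simp: s_def)
  also have "\<dots> = F0 z0 * (\<i> * of_real hh / (2 * of_real pi))"
    unfolding r1 r2 using cosz hh0 by (simp add: field_simps)
  finally show ?thesis unfolding z0_def .
qed

end


context rs begin

lemma Gamma_eq: "Gamma_path (Tt N) x = rectpath z1 z3"
  unfolding Gamma_path_def Let_def z1_def z3_def a_def c_def B_def T_def ..

lemma pc_pos: "pi * c > 0" using c_ge by simp

lemma p12_box: "p1 \<in> box z1 z3" "p2 \<in> box z1 z3" "p2 \<in> box z1 Bc" "p1 \<notin> cbox z1 Bc"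
  using Re_p_gt Re_p_lt Im_p1 Im_p2 cpi_gt pc_pos unfolding z1_def z3_def Bc_def a_def
  by (auto simp: in_box_complex_iff in_cbox_complex_iff p1_eq p2_eq)

lemma p12_ne: "p1 \<noteq> p2" using Im_p1 Im_p2 cpi_gt by auto

lemma J_box: "J \<subseteq> box z1 z3"
  using J_props a_pos unfolding z1_def z3_def by (auto simp: in_box_complex_iff)

lemma P_box: "P \<subseteq> box z1 z3" unfolding P_def using J_box p12_box by auto

lemma B_gt: "B > 1" using B_eq hh_gt N_pos by (simp add: add_pos_nonneg)

lemma cbox_S: "cbox z1 z3 \<subseteq> S" "cbox z1 Bc \<subseteq> S"
  unfolding S_def z1_def z3_def Bc_def using a_pos
  by (auto simp: subset_iff in_box_complex_iff in_cbox_complex_iff)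

lemma pi_Gamma: "path_image (rectpath z1 z3) = cbox z1 z3 - box z1 z3"
  using a_pos B_gt unfolding z1_def z3_def by (intro path_image_rectpath_cbox_minus_box) auto

lemma pi_lower: "path_image (rectpath z1 Bc) = cbox z1 Bc - box z1 Bc"
  using a_pos B_gt unfolding z1_def Bc_def by (intro path_image_rectpath_cbox_minus_box) auto

lemma S_open: "open S" and S_conn: "connected S"
  unfolding S_def by (auto intro: convex_connected)

lemma J_finite: "finite J" unfolding J_def by simp
lemma P_finite: "finite P" unfolding P_def using J_finite by simp

lemma J_inj: "inj_on (\<lambda>j. complex_of_real (real j * hh)) {1..N}"
  using hh_gt by (auto simp: inj_on_def)

lemma rt_sum: "of_real (r_t N x) = of_real hh * (\<Sum>j\<in>{1..N}. F0 (of_real (real j * hh)))"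
proof -
  have "(\<Sum>j\<in>{1..N}. F0 (of_real (real j * hh))) = of_real (\<Sum>j\<in>{1..N}. x / pi * (1 / sqrt (real j * hh) * exp (sqrt (real j * hh) - sqrt (real N * hh / 4)) /
      (exp (2 * sqrt (real j * hh) - 2 * sqrt (real N * hh / 4)) + x)))"
    unfolding of_real_sum
  proof (rule sum.cong)
    fix j assume j: "j \<in> {1..N}"
    then have "real j * hh > 0" using hh_gt by auto
    then show "F0 (of_real (real j * hh)) = of_real (x / pi * (1 / sqrt (real j * hh) * exp (sqrt (real j * hh) - sqrt (real N * hh / 4)) /
      (exp (2 * sqrt (real j * hh) - 2 * sqrt (real N * hh / 4)) + x)))"
      unfolding F0_def by (subst F0_real) (auto simp: T_def Tt_def algebra_simps)
  qed simp
  also have "\<dots> = of_real (x / pi * (\<Sum>j\<in>{1..N}. 1 / sqrt (real j * hh) * exp (sqrt (real j * hh) - sqrt (real N * hh / 4)) /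
      (exp (2 * sqrt (real j * hh) - 2 * sqrt (real N * hh / 4)) + x)))"
    by (simp only: sum_distrib_left)
  finally have 1: "(\<Sum>j\<in>{1..N}. F0 (of_real (real j * hh))) = \<dots>" .
  have 2: "r_t N x = hh * (x / pi * (\<Sum>j\<in>{1..N}. 1 / sqrt (real j * hh) * exp (sqrt (real j * hh) - sqrt (real N * hh / 4)) /
      (exp (2 * sqrt (real j * hh) - 2 * sqrt (real N * hh / 4)) + x)))"
    unfolding r_t_def by (simp add: algebra_simps)
  have "of_real (r_t N x) = of_real hh * of_real (x / pi * (\<Sum>j\<in>{1..N}. 1 / sqrt (real j * hh) * exp (sqrt (real j * hh) - sqrt (real N * hh / 4)) /
      (exp (2 * sqrt (real j * hh) - 2 * sqrt (real N * hh / 4)) + x)))"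
    unfolding 2 by (rule of_real_mult)
  then show ?thesis unfolding 1 .
qed

lemma CG: "contour_integral (rectpath z1 z3) g1 = 2 * of_real pi * \<i> * (residue g1 p1 + residue g1 p2) - of_real (r_t N x)"
proof -
  have "contour_integral (rectpath z1 z3) g1 = 2 * pi * \<i> * (\<Sum>p\<in>P. winding_number (rectpath z1 z3) p * residue g1 p)"
  proof (rule Residue_theorem[OF S_open S_conn P_finite])
    show "g1 holomorphic_on S - P" by (rule holomorphic_on_subset[OF g1_holo S_P_U1])
    show "path_image (rectpath z1 z3) \<subseteq> S - P" using pi_Gamma cbox_S P_box by auto
    show "\<forall>z. z \<notin> S \<longrightarrow> winding_number (rectpath z1 z3) z = 0"
      using cbox_S a_pos B_gt unfolding z1_def z3_def
      by (auto intro!: winding_number_rectpath_outside)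
  qed auto
  also have "(\<Sum>p\<in>P. winding_number (rectpath z1 z3) p * residue g1 p) = (\<Sum>p\<in>P. residue g1 p)"
    using P_box by (intro sum.cong) (auto simp: winding_number_rectpath)
  also have "\<dots> = residue g1 p1 + residue g1 p2 + (\<Sum>p\<in>J. residue g1 p)"
  proof -
    have "p1 \<notin> insert p2 J" "p2 \<notin> J" using p12_ne J_props Im_p1 Im_p2 cpi_gt by auto
    then show ?thesis unfolding P_def using J_finite by (simp add: add.assoc)
  qed
  also have "(\<Sum>p\<in>J. residue g1 p) = (\<Sum>j\<in>{1..N}. residue g1 (of_real (real j * hh)))"
    unfolding J_def by (rule sum.reindex[OF J_inj, unfolded o_def])
  also have "\<dots> = (\<Sum>j\<in>{1..N}. F0 (of_real (real j * hh)) * (\<i> * of_real hh / (2 * of_real pi)))"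
  proof (rule sum.cong[OF refl])
    fix j assume "j \<in> {1..N}"
    then show "residue g1 (of_real (real j * hh)) = F0 (of_real (real j * hh)) * (\<i> * of_real hh / (2 * of_real pi))"
      by (rule res_J)
  qed
  also have "\<dots> = (\<Sum>j\<in>{1..N}. F0 (of_real (real j * hh))) * (\<i> * of_real hh / (2 * of_real pi))"
    by (rule sum_distrib_right[symmetric])
  finally have eq: "contour_integral (rectpath z1 z3) g1 = 2 * pi * \<i> * (residue g1 p1 + residue g1 p2 +
      (\<Sum>j\<in>{1..N}. F0 (of_real (real j * hh))) * (\<i> * of_real hh / (2 * of_real pi)))" .
  have k: "(of_real (2 * pi) * \<i>) * (\<i> * of_real hh / (2 * of_real pi)) = - (of_real hh :: complex)"
    by (simp add: field_simps)
  define SS where "SS = (\<Sum>j\<in>{1..N}. F0 (of_real (real j * hh)))"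
  have "of_real (2 * pi) * \<i> * (SS * (\<i> * of_real hh / (2 * of_real pi))) = SS * ((of_real (2 * pi) * \<i>) * (\<i> * of_real hh / (2 * of_real pi)))"
    by (simp only: ac_simps)
  also have "\<dots> = SS * (- of_real hh)" by (simp only: k)
  also have "\<dots> = - of_real hh * SS" by simp
  finally have k2: "of_real (2 * pi) * \<i> * (SS * (\<i> * of_real hh / (2 * of_real pi))) = - of_real hh * SS" .
  have eq2: "contour_integral (rectpath z1 z3) g1 = 2 * pi * \<i> * (residue g1 p1 + residue g1 p2) +
      of_real (2 * pi) * \<i> * (SS * (\<i> * of_real hh / (2 * of_real pi)))"
    unfolding eq SS_def by (simp only: distrib_left)
  show ?thesis unfolding eq2 k2 rt_sum SS_def[symmetric] by simp
qed

lemma CL: "contour_integral (rectpath z1 Bc) F0 = 2 * of_real pi * \<i> * residue F0 p2"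
proof -
  have "contour_integral (rectpath z1 Bc) F0 = 2 * pi * \<i> * (\<Sum>p\<in>{p1,p2}. winding_number (rectpath z1 Bc) p * residue F0 p)"
  proof (rule Residue_theorem[OF S_open S_conn])
    show "F0 holomorphic_on S - {p1, p2}" by (rule holomorphic_on_subset[OF F0_holo S_p_U0])
    show "path_image (rectpath z1 Bc) \<subseteq> S - {p1, p2}" using pi_lower cbox_S p12_box by auto
    show "\<forall>z. z \<notin> S \<longrightarrow> winding_number (rectpath z1 Bc) z = 0"
      using cbox_S a_pos B_gt unfolding z1_def Bc_def
      by (auto intro!: winding_number_rectpath_outside)
  qed auto
  moreover have "winding_number (rectpath z1 Bc) p1 = 0"
    using p12_box a_pos B_gt unfolding z1_def Bc_def by (intro winding_number_rectpath_outside) auto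
  moreover have "winding_number (rectpath z1 Bc) p2 = 1"
    using p12_box by (intro winding_number_rectpath) auto
  ultimately show ?thesis using p12_ne by simp
qed

end


context rs begin

definition "kf = (\<lambda>u. F0 u * (mu_fun u + 1/2))"

lemma kf_neg: "Im u < 0 \<Longrightarrow> kf u = F0 u" unfolding kf_def mu_fun_def by simp
lemma kf_pos: "Im u \<ge> 0 \<Longrightarrow> kf u = 0" unfolding kf_def mu_fun_def by simp

lemma lower_decomp: "rectpath z1 Bc = linepath z1 z2 +++ linepath z2 Bc +++ linepath Bc 1 +++ linepath 1 z1"
  unfolding rectpath_def Let_def z1_def z2_def Bc_def by (simp add: complex_eq_iff one_complex.code)

lemma Gamma_decomp: "rectpath z1 z3 = linepath z1 z2 +++ linepath z2 z3 +++ linepath z3 z4 +++ linepath z4 z1"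
  unfolding rectpath_def Let_def z1_def z2_def z3_def z4_def by simp

lemma segs_sub: "closed_segment z1 z2 \<subseteq> path_image (rectpath z1 Bc)"
  "closed_segment z2 Bc \<subseteq> path_image (rectpath z1 Bc)"
  "closed_segment Bc 1 \<subseteq> path_image (rectpath z1 Bc)"
  "closed_segment 1 z1 \<subseteq> path_image (rectpath z1 Bc)"
  unfolding lower_decomp by (auto simp: path_image_join)

lemma pl_U0: "path_image (rectpath z1 Bc) \<subseteq> U0"
  using pi_lower cbox_S p12_box S_p_U0 by auto

lemma F0_cont_seg: "closed_segment u v \<subseteq> path_image (rectpath z1 Bc) \<Longrightarrow> continuous_on (closed_segment u v) F0"
  using pl_U0 by (intro holomorphic_on_imp_continuous_on holomorphic_on_subset[OF F0_holo]) auto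

definition "e1 = contour_integral (linepath z1 z2) F0"
definition "e2 = contour_integral (linepath z2 Bc) F0"
definition "e3 = contour_integral (linepath Bc 1) F0"
definition "e4 = contour_integral (linepath 1 z1) F0"

lemma hci_e: "(F0 has_contour_integral e1) (linepath z1 z2)" "(F0 has_contour_integral e2) (linepath z2 Bc)"
  "(F0 has_contour_integral e3) (linepath Bc 1)" "(F0 has_contour_integral e4) (linepath 1 z1)"
  unfolding e1_def e2_def e3_def e4_def
  by (intro has_contour_integral_integral contour_integrable_continuous_linepath F0_cont_seg segs_sub)+

lemma lower_sum: "e1 + e2 + e3 + e4 = 2 * of_real pi * \<i> * residue F0 p2"
proof -
  have "(F0 has_contour_integral (e1 + (e2 + (e3 + e4)))) (rectpath z1 Bc)"
    unfolding lower_decomp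
    by (intro has_contour_integral_join hci_e valid_path_join valid_path_linepath) auto
  then have "contour_integral (rectpath z1 Bc) F0 = e1 + (e2 + (e3 + e4))" by (rule contour_integral_unique)
  then show ?thesis using CL by (simp add: add.assoc)
qed

lemma kf_Gamma: "(kf has_contour_integral (e1 + e2 + e4)) (rectpath z1 z3)"
proof -
  have k1: "(kf has_contour_integral e1) (linepath z1 z2)"
  proof (rule has_contour_integral_eq[OF hci_e(1)])
    fix z assume "z \<in> path_image (linepath z1 z2)"
    then have "Im z = - a" unfolding z1_def z2_def by (simp add: closed_segment_same_Im)
    then show "F0 z = kf z" using a_pos kf_neg by simp
  qed
  have k2a: "(kf has_contour_integral e2) (linepath z2 Bc)"
  proof (rule hci_spike_end[OF hci_e(2)])
    fix z assume z: "z \<in> closed_segment z2 Bc" "z \<noteq> Bc"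
    then have "Re z = B" "Im z \<in> closed_segment (-a) 0" unfolding z2_def Bc_def by (auto simp: closed_segment_same_Re)
    moreover have "Im z \<noteq> 0" using z(2) \<open>Re z = B\<close> unfolding Bc_def by (auto simp: complex_eq_iff)
    ultimately have "Im z < 0" using a_pos by (auto simp: closed_segment_eq_real_ivl)
    then show "kf z = F0 z" by (rule kf_neg)
  qed
  have k2b: "(kf has_contour_integral 0) (linepath Bc z3)"
  proof (rule has_contour_integral_eq[OF has_contour_integral_0])
    fix z assume "z \<in> path_image (linepath Bc z3)"
    then have "Im z \<in> closed_segment 0 a" unfolding z3_def Bc_def by (auto simp: closed_segment_same_Re)
    then have "Im z \<ge> 0" using a_pos by (auto simp: closed_segment_eq_real_ivl)
    then show "0 = kf z" using kf_pos by simp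
  qed
  have k2: "(kf has_contour_integral (e2 + 0)) (linepath z2 z3)"
    by (rule has_contour_integral_split[OF k2a k2b, of "1/2"]) (auto simp: z2_def z3_def Bc_def complex_eq_iff)
  have k3: "(kf has_contour_integral 0) (linepath z3 z4)"
  proof (rule has_contour_integral_eq[OF has_contour_integral_0])
    fix z assume "z \<in> path_image (linepath z3 z4)"
    then have "Im z = a" unfolding z3_def z4_def by (simp add: closed_segment_same_Im)
    then show "0 = kf z" using a_pos kf_pos by simp
  qed
  have k4a: "(kf has_contour_integral 0) (linepath z4 1)"
  proof (rule has_contour_integral_eq[OF has_contour_integral_0])
    fix z assume "z \<in> path_image (linepath z4 1)"
    then have "Im z \<in> closed_segment a 0" unfolding z4_def by (auto simp: closed_segment_same_Re)
    then have "Im z \<ge> 0" using a_pos by (auto simp: closed_segment_eq_real_ivl)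
    then show "0 = kf z" using kf_pos by simp
  qed
  have k4b: "(kf has_contour_integral e4) (linepath 1 z1)"
  proof (rule hci_spike_start[OF hci_e(4)])
    fix z assume z: "z \<in> closed_segment 1 z1" "z \<noteq> 1"
    then have "Re z = 1" "Im z \<in> closed_segment 0 (-a)" unfolding z1_def by (auto simp: closed_segment_same_Re)
    moreover have "Im z \<noteq> 0" using z(2) \<open>Re z = 1\<close> by (auto simp: complex_eq_iff)
    ultimately have "Im z < 0" using a_pos by (auto simp: closed_segment_eq_real_ivl)
    then show "kf z = F0 z" by (rule kf_neg)
  qed
  have k4: "(kf has_contour_integral (0 + e4)) (linepath z4 z1)"
    by (rule has_contour_integral_split[OF k4a k4b, of "1/2"]) (auto simp: z4_def z1_def complex_eq_iff)
  have "(kf has_contour_integral (e1 + ((e2 + 0) + (0 + (0 + e4))))) (rectpath z1 z3)"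
    unfolding Gamma_decomp
    by (intro has_contour_integral_join k1 k2 k3 k4 valid_path_join valid_path_linepath) auto
  then show ?thesis by (simp add: add.assoc)
qed

lemma g1_Gamma: "(g1 has_contour_integral (contour_integral (rectpath z1 z3) g1)) (rectpath z1 z3)"
proof (rule has_contour_integral_integral, rule contour_integrable_holomorphic_simple)
  show "g1 holomorphic_on S - P" by (rule holomorphic_on_subset[OF g1_holo S_P_U1])
  show "open (S - P)" using S_open P_finite by (intro open_Diff finite_imp_closed)
  show "path_image (rectpath z1 z3) \<subseteq> S - P" using pi_Gamma cbox_S P_box by auto
qed auto

lemma I_eq:
  assumes "((\<lambda>u. f_fun (Tt N) u x * delta_fun u) has_contour_integral I) (Gamma_path (Tt N) x)"
  shows "I = contour_integral (rectpath z1 z3) g1 + (e1 + e2 + e4)"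
proof -
  have eq: "(\<lambda>u. f_fun (Tt N) u x * delta_fun u) = (\<lambda>u. g1 u + kf u)"
    unfolding g1_def kf_def F0_def dp_def delta_fun_def T_def by (rule ext) (simp add: algebra_simps)
  have "((\<lambda>u. g1 u + kf u) has_contour_integral (contour_integral (rectpath z1 z3) g1 + (e1 + e2 + e4))) (rectpath z1 z3)"
    by (intro has_contour_integral_add g1_Gamma kf_Gamma)
  moreover have "((\<lambda>u. g1 u + kf u) has_contour_integral I) (rectpath z1 z3)"
    using assms unfolding eq Gamma_eq .
  ultimately show ?thesis using has_contour_integral_unique by blast
qed

end


context rs begin

definition "Fp = (\<lambda>u. of_real (2 * sqrt x / pi) * Arctan (exp (csqrt u - of_real T) / of_real (sqrt x)))"

lemma Fp_deriv:
  assumes u: "Re u > 0" "\<bar>Im u\<bar> < 1/2"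
  shows "(Fp has_field_derivative F0 u) (at u)"
proof -
  define s where "s = csqrt u"
  define E where "E = exp (s - of_real T)"
  define y where "y = E / of_real (sqrt x)"
  have sx: "sqrt x > 0" using x_pos by simp
  have nn: "u \<notin> \<real>\<^sub>\<le>\<^sub>0" using u(1) by (rule Re_pos_nonpos)
  have s0: "s \<noteq> 0" unfolding s_def using u(1) by (metis csqrt_eq_0 zero_complex.simps(1) less_irrefl)
  have sq: "s^2 = u" unfolding s_def by simp
  have Res: "Re s \<ge> 0" unfolding s_def using csqrt_principal[of u] by auto
  have ReU: "Re u = (Re s)^2 - (Im s)^2" and ImU: "Im u = 2 * Re s * Im s"
    using sq by (auto simp: power2_eq_square simp flip: sq)
  have ims0: "\<bar>Im s\<bar> < Re s"
  proof (rule ccontr)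
    assume "\<not> \<bar>Im s\<bar> < Re s"
    then have "Re s * Re s \<le> \<bar>Im s\<bar> * \<bar>Im s\<bar>" using Res by (intro mult_mono) auto
    then show False using ReU u(1) by (simp add: power2_eq_square)
  qed
  have "\<bar>Im s\<bar> * \<bar>Im s\<bar> \<le> \<bar>Im s\<bar> * Re s" using ims0 by (intro mult_left_mono) auto
  also have "\<bar>Im s\<bar> * Re s = \<bar>Im u\<bar> / 2" using ImU Res by (simp add: abs_mult)
  finally have ims1: "\<bar>Im s\<bar> * \<bar>Im s\<bar> < 1/4" using u(2) by simp
  have ims: "\<bar>Im s\<bar> < 1/2"
  proof (rule ccontr)
    assume "\<not> \<bar>Im s\<bar> < 1/2"
    then have "(1/2) * (1/2) \<le> \<bar>Im s\<bar> * \<bar>Im s\<bar>" by (intro mult_mono) auto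
    then show False using ims1 by simp
  qed
  have "cos (Im s) > 0" using ims pi_gt3 by (intro cos_gt_zero_pi) auto
  then have ReE: "Re E > 0" unfolding E_def by (simp add: Re_exp)
  have ycond: "Re y \<noteq> 0" unfolding y_def using ReE sx by simp
  have Dn0: "Dn u \<noteq> 0"
  proof
    assume "Dn u = 0"
    then have "\<bar>Im u\<bar> \<ge> c * pi" by (rule Dn_zero_Im)
    then show False using u(2) cpi_gt by simp
  qed
  have E2: "exp (2 * (s - of_real T)) = E * E" unfolding E_def mult_2 by (rule exp_add)
  have DnE: "E * E + of_real x \<noteq> 0" using Dn0 unfolding Dn_def s_def[symmetric] E2 .
  have sxx: "(of_real (sqrt x) :: complex) * of_real (sqrt x) = of_real x"
  proof -
    have "sqrt x * sqrt x = x" using x_pos by simp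
    then show ?thesis by (metis of_real_mult)
  qed
  have sx0: "(of_real (sqrt x) :: complex) \<noteq> 0" using sx by simp
  have x0: "(of_real x :: complex) \<noteq> 0" using x_pos by simp
  have yy: "1 + y^2 = (E * E + of_real x) / of_real x"
  proof -
    have "y^2 = E * E / (of_real (sqrt x) * of_real (sqrt x))" unfolding y_def by (simp add: power2_eq_square)
    also have "\<dots> = E * E / of_real x" by (simp only: sxx)
    finally show ?thesis using x0 by (simp add: field_simps)
  qed
  have y2: "1 + y^2 \<noteq> 0" unfolding yy using DnE x0 by simp
  have d0': "((\<lambda>u. csqrt u - of_real T) has_field_derivative (inverse (2 * s) - 0)) (at u)"
    unfolding s_def by (intro DERIV_diff has_field_derivative_csqrt[OF nn] DERIV_const)
  then have d0: "((\<lambda>u. csqrt u - of_real T) has_field_derivative inverse (2 * s)) (at u)" by simp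
  have d1: "((\<lambda>u. exp (csqrt u - of_real T)) has_field_derivative E * (inverse (2 * s))) (at u)"
    using DERIV_chain2[OF DERIV_exp d0] unfolding E_def s_def .
  have d2: "((\<lambda>u. exp (csqrt u - of_real T) / of_real (sqrt x)) has_field_derivative E * (inverse (2 * s)) / of_real (sqrt x)) (at u)"
    by (rule DERIV_cdivide[OF d1])
  have d3: "((\<lambda>u. Arctan (exp (csqrt u - of_real T) / of_real (sqrt x))) has_field_derivative inverse (1 + y^2) * (E * (inverse (2 * s)) / of_real (sqrt x))) (at u)"
  proof -
    have a: "(Arctan has_field_derivative inverse (1 + y^2)) (at (exp (csqrt u - of_real T) / of_real (sqrt x)))"
      unfolding y_def[symmetric] E_def[symmetric] s_def[symmetric] using ycond by (intro has_field_derivative_Arctan) auto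
    show ?thesis using DERIV_chain2[OF a d2] .
  qed
  have d4: "(Fp has_field_derivative of_real (2 * sqrt x / pi) * (inverse (1 + y^2) * (E * (inverse (2 * s)) / of_real (sqrt x)))) (at u)"
    unfolding Fp_def by (rule DERIV_cmult[OF d3])
  have "of_real (2 * sqrt x / pi) * (inverse (1 + y^2) * (E * (inverse (2 * s)) / of_real (sqrt x))) = F0 u"
  proof -
    define q where "q = inverse (E * E + of_real x)"
    have inv: "inverse (1 + y^2) = of_real x * q" unfolding yy q_def by (simp add: divide_inverse)
    have "F0 u = of_real x / of_real pi * (1 / s) * (E / (E * E + of_real x))"
      unfolding F0_def f_fun_def s_def[symmetric] E_def[symmetric] E2 ..
    also have "\<dots> = of_real x / of_real pi * (1 / s) * (E * q)" unfolding q_def by (simp add: divide_inverse)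
    finally have F: "F0 u = of_real x / of_real pi * (1 / s) * (E * q)" .
    have "(of_real pi :: complex) \<noteq> 0" by simp
    then show ?thesis unfolding inv F using s0 sx0 by (simp add: field_simps)
  qed
  then show ?thesis using d4 by simp
qed

lemma Fp_real: "t > 0 \<Longrightarrow> Fp (of_real t) = of_real (2 * sqrt x / pi * arctan (exp (sqrt t - T) / sqrt x))"
  unfolding Fp_def by (simp add: csqrt_of_real exp_of_real[symmetric] Arctan_of_real[symmetric] del: exp_of_real)

lemma e3_eq: "e3 = of_real (2 * sqrt x / pi * (arctan (exp (1 - T) / sqrt x) - arctan (exp (sqrt B - T) / sqrt x)))"
proof -
  have "(F0 has_contour_integral (Fp (pathfinish (linepath Bc 1)) - Fp (pathstart (linepath Bc 1)))) (linepath Bc 1)"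
  proof (rule contour_integral_primitive[where S="{u. Re u > 0 \<and> \<bar>Im u\<bar> < 1/2}"])
    fix u assume "u \<in> {u. Re u > 0 \<and> \<bar>Im u\<bar> < 1/2}"
    then show "(Fp has_field_derivative F0 u) (at u within {u. Re u > 0 \<and> \<bar>Im u\<bar> < 1/2})"
      using Fp_deriv has_field_derivative_at_within by blast
  next
    show "path_image (linepath Bc 1) \<subseteq> {u. Re u > 0 \<and> \<bar>Im u\<bar> < 1/2}"
      using B_gt unfolding Bc_def by (auto simp: closed_segment_same_Im closed_segment_eq_real_ivl)
  qed auto
  then have "e3 = Fp 1 - Fp Bc" unfolding e3_def by (simp add: contour_integral_unique)
  also have "Fp 1 = of_real (2 * sqrt x / pi * arctan (exp (1 - T) / sqrt x))"
    using Fp_real[of 1] by simp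
  also have "Fp Bc = of_real (2 * sqrt x / pi * arctan (exp (sqrt B - T) / sqrt x))"
    using Fp_real[of B] B_gt unfolding Bc_def by (simp add: complex_of_real_def)
  finally show ?thesis by (simp add: algebra_simps)
qed

end


context rs begin

lemma exp2: "exp (-2::real) \<le> 1/5"
proof -
  have "exp (2::real) = exp 1 * exp 1" by (simp flip: exp_add)
  also have "\<dots> \<ge> 2.71 * 2.71" using exp1_gt by (intro mult_mono) auto
  finally have "exp (2::real) \<ge> 5" by simp
  then show ?thesis by (simp add: exp_minus field_simps)
qed

lemma Kc: "2 * sqrt x * (exp (-c) / (1 - exp (-c))) \<le> 5/2 * exp (-T)"
proof -
  have ec: "exp (-c) \<le> exp (-2)" using c_ge by simp
  then have ec5: "exp (-c) \<le> 1/5" using exp2 by linarith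
  have sx: "sqrt x > 0" using x_pos by simp
  have "2 * sqrt x * (exp (-c) / (1 - exp (-c))) = 2 * exp (-T) / (1 - exp (-c))"
    using sx by (simp add: exp_mc field_simps)
  also have "\<dots> \<le> 2 * exp (-T) / (4/5)" using ec5 c_ge by (intro divide_left_mono) auto
  finally show ?thesis by simp
qed

lemma Im_z: "Im (of_real pi * p1 / of_real hh) = c / 2" "Im (of_real pi * p2 / of_real hh) = - c / 2"
  unfolding Im_p1[symmetric] Im_p2[symmetric] using Im_p1 Im_p2
  by (simp_all add: hh_def power2_eq_square field_simps)

lemma dp1_bound: "norm (dp p1) \<le> exp (-c) / (1 - exp (-c))"
proof -
  have s: "sin (of_real pi * p1 / of_real hh) \<noteq> 0" using sin_zero_real Im_p1 pc_pos by (auto simp: mult.commute)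
  have nE: "norm (exp (2 * \<i> * (of_real pi * p1 / of_real hh))) = exp (-c)"
    unfolding norm_exp2iz Im_z by simp
  have "exp (-c) < 1" using c_ge by simp
  then show ?thesis unfolding dp_eq dp_formula(1)[OF s] using bound_up nE by metis
qed

lemma dp2_bound: "norm (dp p2 + 1) \<le> exp (-c) / (1 - exp (-c))"
proof -
  have s: "sin (of_real pi * p2 / of_real hh) \<noteq> 0" using sin_zero_real Im_p2 pc_pos by (auto simp: mult.commute)
  have nE: "norm (exp (2 * \<i> * (of_real pi * p2 / of_real hh))) = exp c"
    unfolding norm_exp2iz Im_z by simp
  have eq: "dp p2 + 1 = 1/2 + (\<i>/2) * cot (of_real pi * p2 / of_real hh)" unfolding dp_eq by simp
  have "exp c > 1" using c_ge by simp
  then have "norm (dp p2 + 1) \<le> 1 / (exp c - 1)" unfolding eq dp_formula(2)[OF s] using bound_down nE by metis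
  also have "1 / (exp c - 1) = exp (-c) / (1 - exp (-c))"
    using \<open>exp c > 1\<close> by (simp add: exp_minus field_simps)
  finally show ?thesis .
qed

lemma sqrtB: "sqrt B \<ge> 2 * T"
proof -
  have "(2 * T)^2 \<le> B" unfolding B_def by (simp add: power2_eq_square)
  then have "sqrt ((2 * T)^2) \<le> sqrt B" by (rule real_sqrt_le_mono)
  moreover have "sqrt ((2 * T)^2) = 2 * T" unfolding real_sqrt_abs using T_ge by simp
  ultimately show ?thesis by linarith
qed

definition "v = 2 * sqrt x / pi * (arctan (exp (sqrt B - T) / sqrt x) - arctan (exp (1 - T) / sqrt x)) - sqrt x"

lemma v_bound: "\<bar>v\<bar> \<le> 2 / pi * (1 + exp 1) * exp (-T)"
proof -
  define y1 where "y1 = exp (sqrt B - T) / sqrt x"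
  define y0 where "y0 = exp (1 - T) / sqrt x"
  have sx: "sqrt x > 0" using x_pos by simp
  have y1p: "y1 > 0" and y0p: "y0 > 0" unfolding y1_def y0_def using sx by auto
  have at1: "arctan y1 = pi / 2 - arctan (1 / y1)" using Transcendental.arctan_inverse[of y1] y1p by simp
  have "v = - (2 * sqrt x / pi) * (arctan (1 / y1) + arctan y0)"
    unfolding v_def y1_def[symmetric] y0_def[symmetric] at1 by (simp add: field_simps)
  moreover have "arctan (1/y1) \<ge> 0" "arctan y0 \<ge> 0" using y1p y0p by auto
  ultimately have "\<bar>v\<bar> = (2 * sqrt x / pi) * (arctan (1 / y1) + arctan y0)" using sx by (simp add: abs_mult)
  also have "\<dots> \<le> (2 * sqrt x / pi) * (1 / y1 + y0)"
    using y1p y0p sx by (intro mult_left_mono add_mono arctan_le_self) auto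
  also have "(2 * sqrt x / pi) * (1 / y1 + y0) = 2 / pi * (x * exp (T - sqrt B) + exp (1 - T))"
    unfolding y1_def y0_def using sx x_pos by (simp add: field_simps exp_diff)
  also have "\<dots> \<le> 2 / pi * (exp (-T) + exp 1 * exp (-T))"
  proof -
    have "x * exp (T - sqrt B) \<le> 1 * exp (-T)" using xhi x_pos sqrtB by (intro mult_mono) auto
    moreover have "exp (1 - T) = exp 1 * exp (-T)" by (simp flip: exp_add)
    ultimately show ?thesis by (intro mult_left_mono) auto
  qed
  finally show ?thesis by (simp add: algebra_simps add_divide_distrib)
qed

lemma key:
  assumes hI: "((\<lambda>u. f_fun (Tt N) u x * delta_fun u) has_contour_integral I) (Gamma_path (Tt N) x)"
  shows "of_real (r_t N x - sqrt x) = - I + 2 * of_real pi * \<i> * residue g1 p1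
     + 2 * of_real pi * \<i> * (residue g1 p2 + residue F0 p2) + of_real v"
proof -
  have 1: "I = contour_integral (rectpath z1 z3) g1 + (e1 + e2 + e4)" by (rule I_eq[OF hI])
  have 2: "e1 + e2 + e4 = 2 * of_real pi * \<i> * residue F0 p2 - e3" using lower_sum by (simp add: algebra_simps)
  have 3: "- e3 - of_real (sqrt x) = of_real v" unfolding e3_eq v_def by (simp add: algebra_simps)
  show ?thesis using 1 unfolding 2 CG 3[symmetric] by (simp add: algebra_simps)
qed

lemma main_bound:
  assumes hI: "((\<lambda>u. f_fun (Tt N) u x * delta_fun u) has_contour_integral I) (Gamma_path (Tt N) x)"
    and nI: "norm I < 12 * exp (- Tt N)"
  shows "\<bar>r_t N x - sqrt x\<bar> < 20 * exp (- Tt N)"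
proof -
  have sx: "sqrt x > 0" using x_pos by simp
  have n1: "norm (2 * of_real pi * \<i> * residue g1 p1) = 2 * sqrt x * norm (dp p1)"
    unfolding res_g1_p1 w1_def using exp_cT by (simp add: norm_mult norm_divide)
  have n2: "norm (2 * of_real pi * \<i> * (residue g1 p2 + residue F0 p2)) = 2 * sqrt x * norm (dp p2 + 1)"
  proof -
    have "residue g1 p2 + residue F0 p2 = - (1 / of_real pi) * exp (w2 - of_real T) * (dp p2 + 1)"
      unfolding res_g1_p2 res_F0_p2 by (simp add: algebra_simps add_divide_distrib)
    then show ?thesis unfolding w2_def using exp_cT by (simp add: norm_mult norm_divide)
  qed
  have b1: "norm (2 * of_real pi * \<i> * residue g1 p1) \<le> 5/2 * exp (-T)"
    unfolding n1 using dp1_bound Kc sx by (meson mult_left_mono order_trans zero_le_mult_iff less_imp_le zero_le_numeral)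
  have b2: "norm (2 * of_real pi * \<i> * (residue g1 p2 + residue F0 p2)) \<le> 5/2 * exp (-T)"
    unfolding n2 using dp2_bound Kc sx by (meson mult_left_mono order_trans zero_le_mult_iff less_imp_le zero_le_numeral)
  have b3: "norm (of_real v :: complex) \<le> 2 / pi * (1 + exp 1) * exp (-T)" using v_bound by simp
  have c3: "2 / pi * (1 + exp 1) \<le> 5/2"
  proof -
    have "exp (1::real) < 272/100" by (rule e_less_272)
    then have "2 * (1 + exp 1) < 2 * (1 + (272/100::real))" by simp
    also have "\<dots> \<le> 5/2 * 3" by simp
    also have "\<dots> < 5/2 * pi" using pi_gt3 by simp
    finally have "2 * (1 + exp 1) \<le> 5/2 * pi" by simp
    then show ?thesis by (simp add: field_simps)
  qed
  have b3': "norm (of_real v :: complex) \<le> 5/2 * exp (-T)"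
    using b3 c3 by (meson mult_right_mono exp_ge_zero order_trans)
  have "\<bar>r_t N x - sqrt x\<bar> = norm (of_real (r_t N x - sqrt x) :: complex)" by (rule norm_of_real[symmetric])
  also have "\<dots> \<le> norm I + norm (2 * of_real pi * \<i> * residue g1 p1)
     + norm (2 * of_real pi * \<i> * (residue g1 p2 + residue F0 p2)) + norm (of_real v :: complex)"
  proof -
    define A1 where "A1 = 2 * of_real pi * \<i> * residue g1 p1"
    define A2 where "A2 = 2 * of_real pi * \<i> * (residue g1 p2 + residue F0 p2)"
    define V where "V = (of_real v :: complex)"
    have "norm (- I + A1 + A2 + V) \<le> norm (- I + A1 + A2) + norm V" by (rule norm_triangle_ineq)
    also have "norm (- I + A1 + A2) \<le> norm (- I + A1) + norm A2" by (rule norm_triangle_ineq)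
    also have "norm (- I + A1) \<le> norm (- I) + norm A1" by (rule norm_triangle_ineq)
    finally have "norm (- I + A1 + A2 + V) \<le> norm I + norm A1 + norm A2 + norm V" by simp
    then show ?thesis unfolding key[OF hI] A1_def A2_def V_def .
  qed
  also have "\<dots> < 12 * exp (-T) + 5/2 * exp (-T) + 5/2 * exp (-T) + 5/2 * exp (-T)"
    using nI b1 b2 b3' unfolding T_def by linarith
  finally have h: "\<bar>r_t N x - sqrt x\<bar> < 12 * exp (-T) + 5/2 * exp (-T) + 5/2 * exp (-T) + 5/2 * exp (-T)" .
  have "exp (-T) > 0" by simp
  then show ?thesis using h unfolding T_def by linarith
qed

end


lemma exp_ge_pow4: "(s::real) \<ge> 0 \<Longrightarrow> exp s \<ge> s^4 / 16"
proof -
  assume s: "s \<ge> 0"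
  have "exp s = exp (s/8) ^ 8" by (simp flip: exp_of_nat_mult)
  also have "exp (s/8) ^ 8 \<ge> (1 + s/8) ^ 8" using s by (intro power_mono) (auto simp: exp_ge_add_one_self)
  finally have 1: "exp s \<ge> (1 + s/8) ^ 8" .
  have "(1 + s/8)^2 \<ge> s/2"
  proof -
    have "(1 + s/8)^2 - s/2 = (1 - s/8)^2" by (simp add: power2_eq_square algebra_simps)
    then show ?thesis using zero_le_power2[of "1 - s/8"] by linarith
  qed
  then have "((1 + s/8)^2)^4 \<ge> (s/2)^4" using s by (intro power_mono) auto
  then have "(1 + s/8)^8 \<ge> s^4/16" by (simp add: power_mult[symmetric] power_divide)
  then show ?thesis using 1 by linarith
qed

lemma sum_inv_sq: "(\<Sum>j=1..Suc n. 1 / (real j)^2) \<le> 2 - 1 / real (Suc n)"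
proof (induction n)
  case 0 then show ?case by simp
next
  case (Suc n)
  have "(\<Sum>j=1..Suc (Suc n). 1 / (real j)^2) = (\<Sum>j=1..Suc n. 1 / (real j)^2) + 1 / (real (Suc (Suc n)))^2"
    by simp
  also have "\<dots> \<le> 2 - 1 / real (Suc n) + 1 / (real (Suc (Suc n)))^2" using Suc by simp
  also have "\<dots> \<le> 2 - 1 / real (Suc (Suc n))"
  proof -
    define m where "m = real n + 1"
    have m: "m \<ge> 1" unfolding m_def by simp
    have "1 / (m + 1)^2 \<le> 1 / m - 1 / (m + 1)"
    proof -
      have "1 / m - 1 / (m + 1) = 1 / (m * (m + 1))" using m by (simp add: field_simps)
      also have "1 / (m + 1)^2 \<le> 1 / (m * (m + 1))" using m
        by (intro divide_left_mono mult_mono) (auto simp: power2_eq_square)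
      finally show ?thesis by simp
    qed
    then show ?thesis unfolding m_def by (simp add: add.commute)
  qed
  finally show ?case .
qed

lemma sum_inv_sq2: "(\<Sum>j=1..N. 1 / (real j)^2) \<le> 2"
proof (cases N)
  case 0 then show ?thesis by simp
next
  case (Suc n)
  have "(\<Sum>j=1..Suc n. 1 / (real j)^2) \<le> 2 - 1 / real (Suc n)" by (rule sum_inv_sq)
  moreover have "1 / real (Suc n) \<ge> 0" by simp
  ultimately have "(\<Sum>j=1..Suc n. 1 / (real j)^2) \<le> 2" by linarith
  then show ?thesis using Suc by simp
qed

lemma hh_ge16: "hh \<ge> 16"
proof -
  have "pi * pi \<ge> 3 * 3" using pi_gt3 by (intro mult_mono) auto
  then show ?thesis by (simp add: hh_def power2_eq_square)
qed

lemma term_bound: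
  assumes j: "j \<ge> 1" and x: "x \<ge> 0"
  shows "1 / sqrt (real j * hh) * exp (sqrt (real j * hh) - T) / (exp (2 * sqrt (real j * hh) - 2 * T) + x)
         \<le> 4 * exp T / (hh^2 * (real j)^2)"
proof -
  define s where "s = sqrt (real j * hh)"
  have "real j \<ge> 1" using j by simp
  then have "real j * hh \<ge> 1 * 16" using hh_ge16 by (intro mult_mono) auto
  then have jh: "real j * hh \<ge> 16" by simp
  have s4: "s \<ge> 4" unfolding s_def using real_sqrt_le_mono[OF jh] by simp
  have s44: "s^4 = (real j)^2 * hh^2"
  proof -
    have "s^2 = real j * hh" unfolding s_def using jh by simp
    moreover have "s^4 = (s^2)^2" by (simp flip: power_mult)
    ultimately have "s^4 = (real j * hh)^2" by simp
    then show ?thesis by (simp add: power_mult_distrib)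
  qed
  have "exp (s - T) / (exp (2 * s - 2 * T) + x) \<le> exp (s - T) / exp (2 * s - 2 * T)"
    using x by (intro divide_left_mono mult_pos_pos add_pos_nonneg) auto
  also have "\<dots> = exp ((s - T) - (2 * s - 2 * T))" by (rule exp_diff[symmetric])
  also have "\<dots> = exp (T - s)" by (simp add: algebra_simps)
  also have "\<dots> = exp T / exp s" by (rule exp_diff)
  also have "\<dots> \<le> exp T / (s^4/16)"
    using exp_ge_pow4[of s] s4 by (intro divide_left_mono) auto
  finally have 1: "exp (s - T) / (exp (2 * s - 2 * T) + x) \<le> 16 * exp T / s^4" by (simp add: mult.commute)
  have 2: "1 / s \<le> 1/4" using s4 by simp
  have nn: "0 \<le> exp (s - T) / (exp (2 * s - 2 * T) + x)" using x by (intro divide_nonneg_nonneg add_nonneg_nonneg) auto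
  have "1 / s * exp (s - T) / (exp (2 * s - 2 * T) + x) = (1/s) * (exp (s - T) / (exp (2 * s - 2 * T) + x))" by simp
  also have "\<dots> \<le> (1/4) * (16 * exp T / s^4)" using 1 2 s4 nn by (intro mult_mono) auto
  also have "\<dots> = 4 * exp T / (hh^2 * (real j)^2)" unfolding s44 by (simp add: field_simps)
  finally show ?thesis unfolding s_def .
qed

lemma rt_nonneg: "x \<ge> 0 \<Longrightarrow> r_t N x \<ge> 0"
  unfolding r_t_def using hh_ge16 by (intro mult_nonneg_nonneg sum_nonneg divide_nonneg_nonneg add_nonneg_nonneg) auto

lemma small_case:
  assumes x: "0 \<le> x" "x \<le> exp (4 - 2 * Tt N)"
  shows "\<bar>r_t N x - sqrt x\<bar> < 20 * exp (- Tt N)"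
proof -
  define T where "T = Tt N"
  have TT: "sqrt (real N * hh / 4) = T" unfolding T_def Tt_def ..
  have hp: "hh > 0" using hh_ge16 by simp
  have "r_t N x = x * hh / pi * (\<Sum>j=1..N. 1 / sqrt (real j * hh) * exp (sqrt (real j * hh) - T) / (exp (2 * sqrt (real j * hh) - 2 * T) + x))"
    unfolding r_t_def TT ..
  also have "\<dots> \<le> x * hh / pi * (\<Sum>j=1..N. 4 * exp T / (hh^2 * (real j)^2))"
    using x hp by (intro mult_left_mono sum_mono term_bound) auto
  also have "(\<Sum>j=1..N. 4 * exp T / (hh^2 * (real j)^2)) = 4 * exp T / hh^2 * (\<Sum>j=1..N. 1 / (real j)^2)"
    by (simp add: sum_distrib_left)
  also have "x * hh / pi * (4 * exp T / hh^2 * (\<Sum>j=1..N. 1 / (real j)^2)) \<le> x * hh / pi * (4 * exp T / hh^2 * 2)"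
    using x hp by (intro mult_left_mono sum_inv_sq2) auto
  also have "\<dots> = x * exp T * (8 / (pi * hh))" using hp by (simp add: field_simps power2_eq_square)
  also have "\<dots> \<le> exp (4 - 2 * T) * exp T * (8 / (pi * hh))" using x hp unfolding T_def by (intro mult_right_mono) auto
  also have "\<dots> = exp 4 * (8 / (pi * hh)) * exp (- T)" by (simp add: field_simps flip: exp_add)
  finally have r1: "r_t N x \<le> exp 4 * (8 / (pi * hh)) * exp (- T)" .
  have c1: "exp (4::real) * (8 / (pi * hh)) \<le> 10"
  proof -
    have "exp (4::real) = exp 1 ^ 4" by (simp flip: exp_of_nat_mult)
    also have "\<dots> \<le> (272/100) ^ 4" using e_less_272 by (intro power_mono) auto
    finally have e4: "exp (4::real) \<le> (272/100)^4" .
    have "pi * hh \<ge> 3 * 16" using pi_gt3 hh_ge16 by (intro mult_mono) auto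
    then have "8 / (pi * hh) \<le> 8 / 48" by (intro divide_left_mono) auto
    then have h: "exp (4::real) * (8 / (pi * hh)) \<le> (272/100)^4 * (8 / 48)"
      using e4 hh_ge16 by (intro mult_mono) auto
    moreover have "(272/100)^4 * (8 / 48) \<le> (10::real)" by (simp add: power_divide)
    ultimately show ?thesis by linarith
  qed
  have r2: "r_t N x \<le> 10 * exp (- T)" using r1 c1 by (meson mult_right_mono exp_ge_zero order_trans)
  have "sqrt x \<le> sqrt (exp (4 - 2 * T))" using x unfolding T_def by simp
  also have "sqrt (exp (4 - 2 * T)) = exp (2 - T)"
  proof -
    have "exp (4 - 2 * T) = (exp (2 - T))^2" by (simp add: power2_eq_square flip: exp_add)
    then show ?thesis by simp
  qed
  also have "exp (2 - T) = exp 2 * exp (- T)" by (simp flip: exp_add)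
  also have "\<dots> \<le> 8 * exp (- T)"
  proof -
    have "exp (2::real) = exp 1 ^ 2" by (simp flip: exp_of_nat_mult)
    also have "\<dots> \<le> (272/100)^2" using e_less_272 by (intro power_mono) auto
    finally have "exp (2::real) \<le> (272/100)^2" .
    moreover have "(272/100)^2 \<le> (8::real)" by (simp add: power_divide)
    ultimately have "exp (2::real) \<le> 8" by linarith
    then show ?thesis by (intro mult_right_mono) auto
  qed
  finally have s1: "sqrt x \<le> 8 * exp (- T)" .
  have "r_t N x \<ge> 0" using x by (intro rt_nonneg) 
  moreover have "sqrt x \<ge> 0" using x by simp
  moreover have "exp (- T) > 0" by simp
  ultimately show ?thesis using r2 s1 unfolding T_def by linarith
qed


theorem theorem2p1:
  assumes "\<forall>\<^sub>F N in sequentially. \<forall>x \<in> {exp (4 - 2 * Tt N)..1}.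
      \<exists>I. ((\<lambda>u. f_fun (Tt N) u x * delta_fun u) has_contour_integral I) (Gamma_path (Tt N) x)
          \<and> norm I < 12 * exp (- Tt N)"
  shows "\<forall>\<^sub>F N in sequentially. \<forall>x \<in> {0..1::real}.
      \<bar>r_t N x - sqrt x\<bar> < 20 * exp (- sqrt (real N * hh / 4))
      \<and> 20 * exp (- sqrt (real N * hh / 4)) = 20 * exp (- pi * sqrt (real N / 2))"
  using assms
proof (rule eventually_mono)
  fix N :: nat
  assume H: "\<forall>x \<in> {exp (4 - 2 * Tt N)..1}.
      \<exists>I. ((\<lambda>u. f_fun (Tt N) u x * delta_fun u) has_contour_integral I) (Gamma_path (Tt N) x)
          \<and> norm I < 12 * exp (- Tt N)"
  have eqT: "sqrt (real N * hh / 4) = Tt N" unfolding Tt_def ..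
  have eq2: "sqrt (real N * hh / 4) = pi * sqrt (real N / 2)"
  proof -
    have e: "real N * hh / 4 = pi^2 * (real N / 2)" by (simp add: hh_def)
    have "sqrt (real N * hh / 4) = sqrt (pi^2) * sqrt (real N / 2)" unfolding e by (rule real_sqrt_mult)
    then show ?thesis by simp
  qed
  show "\<forall>x \<in> {0..1::real}.
      \<bar>r_t N x - sqrt x\<bar> < 20 * exp (- sqrt (real N * hh / 4))
      \<and> 20 * exp (- sqrt (real N * hh / 4)) = 20 * exp (- pi * sqrt (real N / 2))"
  proof
    fix x :: real assume x: "x \<in> {0..1}"
    have "\<bar>r_t N x - sqrt x\<bar> < 20 * exp (- Tt N)"
    proof (cases "x \<ge> exp (4 - 2 * Tt N)")
      case True
      then have "x \<in> {exp (4 - 2 * Tt N)..1}" using x by simp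
      then obtain I where I: "((\<lambda>u. f_fun (Tt N) u x * delta_fun u) has_contour_integral I) (Gamma_path (Tt N) x)"
          "norm I < 12 * exp (- Tt N)" using H by blast
      interpret rs N x using True x by unfold_locales auto
      show ?thesis using main_bound[OF I] .
    next
      case False
      then show ?thesis using small_case x by auto
    qed
    then show "\<bar>r_t N x - sqrt x\<bar> < 20 * exp (- sqrt (real N * hh / 4))
      \<and> 20 * exp (- sqrt (real N * hh / 4)) = 20 * exp (- pi * sqrt (real N / 2))"
      using eqT eq2 by simp
  qed
qed


end
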